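(* Let $(\mathsf P,\mathcal O)$ be a semitopology and $p\in\mathsf P$. The following are equivalent: (1) $p$ is regular, i.e. $p\in K(p)$ and $K(p)$ is topen; (2) $K(p)$ is a greatest topen neighbourhood of $p$; (3) $K(p)$ is a maximal topen neighbourhood of $p$; (4) $p$ has a maximal topen neighbourhood; (5) $p$ has some topen neighbourhood (a topen set containing $p$).
   Context: A semitopology is a pair $(\mathsf P,\mathcal O)$ where $\mathsf P$ is a set and $\mathcal O\subseteq\mathcal P(\mathsf P)$ contains $\varnothing$ and $\mathsf P$ and is closed under arbitrary unions. Write $X\between Y$ when $X\cap Y\neq\varnothing$. A set $T$ is transitive when for all $O,O'\in\mathcal O$, $O\between T\between O'$ implies $O\between O'$; topen means nonempty, open and transitive. Points $p,p'$ are intertwined when every open set containing $p$ intersects every open set containing $p'$; $I(p)$ denotes the set of points intertwined with $p$. The interior $\mathrm{int}(R)$ of $R\subseteq\mathsf P$ is the union of all open sets contained in $R$. The community of $p$ is $K(p)=\mathrm{int}(I(p))$. A topen neighbourhood of $p$ is a topen set containing $p$. *)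

theory Defs
  imports Main
begin

definition semitopology :: "'a set \<Rightarrow> 'a set set \<Rightarrow> bool" where
  "semitopology P Opn \<longleftrightarrow> Opn \<subseteq> Pow P \<and> {} \<in> Opn \<and> P \<in> Opn \<and> (\<forall>S. S \<subseteq> Opn \<longrightarrow> \<Union>S \<in> Opn)"

definition between :: "'a set \<Rightarrow> 'a set \<Rightarrow> bool" where
  "between X Y \<longleftrightarrow> X \<inter> Y \<noteq> {}"

definition transitive_set :: "'a set set \<Rightarrow> 'a set \<Rightarrow> bool" where
  "transitive_set Opn T \<longleftrightarrow>
     (\<forall>A\<in>Opn. \<forall>B\<in>Opn. between A T \<and> between T B \<longrightarrow> between A B)"

definition topen :: "'a set set \<Rightarrow> 'a set \<Rightarrow> bool" where
  "topen Opn T \<longleftrightarrow> T \<noteq> {} \<and> T \<in> Opn \<and> transitive_set Opn T"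

definition intertwined :: "'a set set \<Rightarrow> 'a \<Rightarrow> 'a \<Rightarrow> bool" where
  "intertwined Opn p q \<longleftrightarrow> (\<forall>A\<in>Opn. \<forall>B\<in>Opn. p \<in> A \<and> q \<in> B \<longrightarrow> between A B)"

definition intertwined_set :: "'a set \<Rightarrow> 'a set set \<Rightarrow> 'a \<Rightarrow> 'a set" where
  "intertwined_set P Opn p = {q \<in> P. intertwined Opn p q}"

definition interior :: "'a set set \<Rightarrow> 'a set \<Rightarrow> 'a set" where
  "interior Opn R = \<Union>{A \<in> Opn. A \<subseteq> R}"

definition community :: "'a set \<Rightarrow> 'a set set \<Rightarrow> 'a \<Rightarrow> 'a set" where
  "community P Opn p = interior Opn (intertwined_set P Opn p)"

definition regular :: "'a set \<Rightarrow> 'a set set \<Rightarrow> 'a \<Rightarrow> bool" where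
  "regular P Opn p \<longleftrightarrow> p \<in> community P Opn p \<and> topen Opn (community P Opn p)"

definition topen_nbhd :: "'a set set \<Rightarrow> 'a \<Rightarrow> 'a set \<Rightarrow> bool" where
  "topen_nbhd Opn p T \<longleftrightarrow> topen Opn T \<and> p \<in> T"

definition greatest_topen_nbhd :: "'a set set \<Rightarrow> 'a \<Rightarrow> 'a set \<Rightarrow> bool" where
  "greatest_topen_nbhd Opn p T \<longleftrightarrow> topen_nbhd Opn p T \<and> (\<forall>T'. topen_nbhd Opn p T' \<longrightarrow> T' \<subseteq> T)"

definition maximal_topen_nbhd :: "'a set set \<Rightarrow> 'a \<Rightarrow> 'a set \<Rightarrow> bool" where
  "maximal_topen_nbhd Opn p T \<longleftrightarrow> topen_nbhd Opn p T \<and> (\<forall>T'. topen_nbhd Opn p T' \<and> T \<subseteq> T' \<longrightarrow> T' = T)"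

end

theory Submission
  imports Defs
begin

lemma key:
  assumes st: "semitopology P Opn" and tn: "topen_nbhd Opn p T"
  shows "greatest_topen_nbhd Opn p (community P Opn p)"
proof -
  have T: "T \<noteq> {}" "T \<in> Opn" "transitive_set Opn T" "p \<in> T"
    using tn by (auto simp: topen_nbhd_def topen_def)
  have pow: "Opn \<subseteq> Pow P" using st by (simp add: semitopology_def)
  have sub: "T' \<subseteq> community P Opn p" if "topen_nbhd Opn p T'" for T'
  proof -
    have T': "T' \<in> Opn" "transitive_set Opn T'" "p \<in> T'"
      using that by (auto simp: topen_nbhd_def topen_def)
    have "T' \<subseteq> intertwined_set P Opn p"
    proof
      fix q assume q: "q \<in> T'"
      have "q \<in> P" using q T'(1) pow by blast
      moreover have "intertwined Opn p q"
        unfolding intertwined_def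
      proof (intro ballI impI)
        fix A B assume "A \<in> Opn" "B \<in> Opn" "p \<in> A \<and> q \<in> B"
        then show "between A B" using T' q unfolding transitive_set_def between_def by blast
      qed
      ultimately show "q \<in> intertwined_set P Opn p" by (simp add: intertwined_set_def)
    qed
    then show ?thesis using T'(1) unfolding community_def interior_def by blast
  qed
  have open_K: "community P Opn p \<in> Opn"
    using st unfolding community_def interior_def semitopology_def by auto
  have pK: "p \<in> community P Opn p" using sub[OF tn] T(4) by blast
  have trK: "transitive_set Opn (community P Opn p)"
    unfolding transitive_set_def
  proof (intro ballI impI)
    fix A B assume A: "A \<in> Opn" and B: "B \<in> Opn"
      and h: "between A (community P Opn p) \<and> between (community P Opn p) B"
    obtain q where q: "q \<in> A" "q \<in> community P Opn p" using h by (auto simp: between_def)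
    obtain r where r: "r \<in> B" "r \<in> community P Opn p" using h by (auto simp: between_def)
    have "q \<in> intertwined_set P Opn p" "r \<in> intertwined_set P Opn p"
      using q r unfolding community_def interior_def by auto
    then have "intertwined Opn p q" "intertwined Opn p r" by (auto simp: intertwined_set_def)
    then have "between T A" "between T B" using A B T q r unfolding intertwined_def by blast+
    then show "between A B" using T(3) A B unfolding transitive_set_def between_def by blast
  qed
  show ?thesis using sub pK open_K trK
    by (auto simp: greatest_topen_nbhd_def topen_nbhd_def topen_def)
qed

theorem theorem4p12:
  fixes P :: "'a set" and Opn :: "'a set set" and p :: 'a
  assumes "semitopology P Opn" and "p \<in> P"
  shows "(regular P Opn p \<longleftrightarrow> greatest_topen_nbhd Opn p (community P Opn p))
       \<and> (greatest_topen_nbhd Opn p (community P Opn p) \<longleftrightarrow> maximal_topen_nbhd Opn p (community P Opn p))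
       \<and> (maximal_topen_nbhd Opn p (community P Opn p) \<longleftrightarrow> (\<exists>T. maximal_topen_nbhd Opn p T))
       \<and> ((\<exists>T. maximal_topen_nbhd Opn p T) \<longleftrightarrow> (\<exists>T. topen_nbhd Opn p T))"
proof -
  have G: "(\<exists>T. topen_nbhd Opn p T) \<Longrightarrow> greatest_topen_nbhd Opn p (community P Opn p)"
    using key[OF assms(1)] by blast
  have GM: "greatest_topen_nbhd Opn p K \<Longrightarrow> maximal_topen_nbhd Opn p K" for K
    by (auto simp: greatest_topen_nbhd_def maximal_topen_nbhd_def)
  have MT: "maximal_topen_nbhd Opn p K \<Longrightarrow> topen_nbhd Opn p K" for K
    by (simp add: maximal_topen_nbhd_def)
  have RG: "regular P Opn p \<longleftrightarrow> greatest_topen_nbhd Opn p (community P Opn p)"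
    using G by (auto simp: regular_def greatest_topen_nbhd_def topen_nbhd_def)
  show ?thesis using G GM MT RG by blast
qed

end
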